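(* Let $m,k\in\mathbb{N}$ and let $\alpha,\beta\in\mathbb{C}$ with $\alpha,\beta,1+\alpha+\beta+k\notin\mathbb{Z}_0^-$. Then \[ {}_3F_2\left[\begin{array}{r} -m,\ \alpha,\ \beta;\\ -m-k,\ 1+\alpha+\beta+k;\end{array}1\right]_m=\frac{\left(1+\alpha+k\right)_m\left(1+\beta+k\right)_m}{\left(1+k\right)_m\left(1+\alpha+\beta+k\right)_m}. \]
   Context: $\mathbb{N}=\{1,2,3,\dots\}$, $\mathbb{Z}_0^-=\{0,-1,-2,\dots\}$. For $a\in\mathbb{C}$ and $n\in\mathbb{N}_0$, $(a)_0=1$ and $(a)_n=a(a+1)\cdots(a+n-1)$. For $N\in\mathbb{N}_0$, ${}_3F_2\left[\begin{array}{r} a_1,a_2,a_3;\\ b_1,b_2;\end{array}z\right]_N=\sum_{n=0}^{N}\frac{(a_1)_n(a_2)_n(a_3)_n}{(b_1)_n(b_2)_n}\frac{z^n}{n!}$ (the sum of the first $N+1$ terms), defined whenever $(b_1)_n(b_2)_n\neq0$ for $0\le n\le N$. *)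

theory Defs
  imports Complex_Main
begin

definition hyp3F2_trunc ::
  "complex \<Rightarrow> complex \<Rightarrow> complex \<Rightarrow> complex \<Rightarrow> complex \<Rightarrow> complex \<Rightarrow> nat \<Rightarrow> complex" where
  "hyp3F2_trunc a1 a2 a3 b1 b2 z N =
     (\<Sum>n=0..N. pochhammer a1 n * pochhammer a2 n * pochhammer a3 n /
                 (pochhammer b1 n * pochhammer b2 n) * z ^ n / of_nat (fact n))"

end

theory Submission
  imports Defs
begin

definition XX :: "nat \<Rightarrow> complex \<Rightarrow> complex \<Rightarrow> complex \<Rightarrow> nat \<Rightarrow> complex" where
 "XX n a b e j = pochhammer a j * pochhammer b j * pochhammer (a+b+e+of_nat j) (Suc n - j) * pochhammer e (Suc n - j)"
definition TT :: "nat \<Rightarrow> complex \<Rightarrow> complex \<Rightarrow> complex \<Rightarrow> nat \<Rightarrow> complex" where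
 "TT n a b e j = of_nat (n choose j) * pochhammer a j * pochhammer b j * pochhammer (a+b+(e+1)+of_nat j) (n-j) * pochhammer (e+1) (n-j)"
definition GG :: "nat \<Rightarrow> complex \<Rightarrow> complex \<Rightarrow> complex \<Rightarrow> nat \<Rightarrow> complex" where
 "GG n a b e j = - (of_nat j * (a+b+e+of_nat j)) * TT n a b e j"
definition SS :: "nat \<Rightarrow> complex \<Rightarrow> complex \<Rightarrow> complex \<Rightarrow> complex" where
 "SS n a b e = (\<Sum>j\<le>n. of_nat (n choose j) * pochhammer a j * pochhammer b j * pochhammer (a+b+e+of_nat j) (n-j) * pochhammer e (n-j))"

lemma key_lt:
  assumes "j < n"
  shows "of_nat (n choose j) * (XX n a b e j + XX n a b e (Suc j)) - (a+e)*(b+e)*TT n a b e j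
         = GG n a b e (Suc j) - GG n a b e j"
proof -
  obtain r where n: "n = j + Suc r" using assms less_iff_Suc_add by auto
  have e1: "Suc n - j = Suc (Suc r)" "n - j = Suc r" "n - Suc j = r" "Suc n - Suc j = Suc r" using n by auto
  have bc: "of_nat (Suc j) * of_nat (n choose Suc j) = (of_nat (Suc r) * of_nat (n choose j) :: complex)"
  proof -
    have "Suc j * (n choose Suc j) = (n - j) * (n choose j)"
      by (metis binomial_absorb_comp Suc_times_binomial_eq mult.commute binomial_Suc_Suc n add_Suc_right
           diff_Suc_1 Suc_times_binomial  binomial_absorption) 
    then show ?thesis using e1 by (metis of_nat_mult)
  qed
  define s where "s = a+b+e+of_nat j"
  have p1: "pochhammer (a+b+e+of_nat j) (Suc (Suc r)) = s*(s+1)*pochhammer (s+2) r"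
    unfolding s_def by (simp add: pochhammer_rec algebra_simps)
  have p2: "pochhammer e (Suc (Suc r)) = e * (pochhammer (e+1) r * (e+1+of_nat r))"
    using pochhammer_rec[of e "Suc r"] pochhammer_Suc[of "e+1" r] by simp
  have p3: "pochhammer a (Suc j) = pochhammer a j * (a + of_nat j)" "pochhammer b (Suc j) = pochhammer b j * (b + of_nat j)"
    by (simp_all add: pochhammer_Suc)
  have p4: "pochhammer (a+b+e+of_nat (Suc j)) (Suc r) = (s+1)*pochhammer (s+2) r"
    unfolding s_def by (simp add: pochhammer_rec algebra_simps)
  have p5: "pochhammer e (Suc r) = e * pochhammer (e+1) r"
    by (simp add: pochhammer_rec)
  have p6: "pochhammer (a+b+(e+1)+of_nat j) (Suc r) = (s+1)*pochhammer (s+2) r"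
    unfolding s_def by (simp add: pochhammer_rec algebra_simps)
  have p7: "pochhammer (e+1) (Suc r) = pochhammer (e+1) r * (e+1+of_nat r)"
    by (simp add: pochhammer_Suc)
  have p8: "pochhammer (a+b+(e+1)+of_nat (Suc j)) r = pochhammer (s+2) r"
    unfolding s_def by (simp add: algebra_simps)
  have p9: "pochhammer (s+1) (Suc r) = (s+1)*pochhammer (s+2) r"
    by (simp add: pochhammer_rec algebra_simps)
  have sj: "a+b+e+of_nat (Suc j) = s + 1" unfolding s_def by simp
  show ?thesis
    unfolding XX_def TT_def GG_def e1 p1 p2 p3 p4 p5 p6 p7 p8 sj
    using bc
    unfolding s_def[symmetric]
    using bc s_def p9 unfolding of_nat_Suc by algebra
qed

lemma key_eq:
  shows "of_nat (n choose n) * (XX n a b e n + XX n a b e (Suc n)) - (a+e)*(b+e)*TT n a b e n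
         = GG n a b e (Suc n) - GG n a b e n"
proof -
  have z: "n choose Suc n = 0" by (simp add: binomial_eq_0)
  show ?thesis unfolding XX_def TT_def GG_def z
    by (simp add: pochhammer_Suc algebra_simps)
qed

lemma key_le:
  assumes "j \<le> n"
  shows "of_nat (n choose j) * (XX n a b e j + XX n a b e (Suc j)) - (a+e)*(b+e)*TT n a b e j
         = GG n a b e (Suc j) - GG n a b e j"
  using assms key_lt[of j n] key_eq[of n] by (cases "j = n") auto

lemma SS_step: "SS (Suc n) a b e = (a+e)*(b+e)*SS n a b (e+1)"
proof -
  let ?X = "XX n a b e"
  let ?C = "\<lambda>n j. (of_nat (n choose j) :: complex)"
  have "SS (Suc n) a b e = (\<Sum>j\<le>Suc n. ?C (Suc n) j * ?X j)"
    unfolding SS_def XX_def by (simp add: mult.assoc)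
  also have "\<dots> = ?X 0 + (\<Sum>i\<le>n. ?C n i * ?X (Suc i)) + (\<Sum>i\<le>n. ?C n (Suc i) * ?X (Suc i))"
    by (simp add: sum.atMost_Suc_shift sum.distrib algebra_simps del: sum.atMost_Suc)
  also have "?X 0 + (\<Sum>i\<le>n. ?C n (Suc i) * ?X (Suc i)) = (\<Sum>j\<le>n. ?C n j * ?X j)"
  proof -
    have "(\<Sum>j\<le>Suc n. ?C n j * ?X j) = ?X 0 + (\<Sum>i\<le>n. ?C n (Suc i) * ?X (Suc i))"
      by (simp add: sum.atMost_Suc_shift del: sum.atMost_Suc)
    moreover have "(\<Sum>j\<le>Suc n. ?C n j * ?X j) = (\<Sum>j\<le>n. ?C n j * ?X j)"
      by simp
    ultimately show ?thesis by simp
  qed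
  then have "?X 0 + (\<Sum>i\<le>n. ?C n i * ?X (Suc i)) + (\<Sum>i\<le>n. ?C n (Suc i) * ?X (Suc i))
      = (\<Sum>j\<le>n. ?C n j * (?X j + ?X (Suc j)))"
    by (simp add: sum.distrib algebra_simps)
  also have "\<dots> = (\<Sum>j\<le>n. (a+e)*(b+e)*TT n a b e j + (GG n a b e (Suc j) - GG n a b e j))"
    by (rule sum.cong) (auto simp: key_le[symmetric])
  also have "\<dots> = (a+e)*(b+e)*(\<Sum>j\<le>n. TT n a b e j) + (\<Sum>j<Suc n. GG n a b e (Suc j) - GG n a b e j)"
    by (simp add: sum.distrib sum_distrib_left lessThan_Suc_atMost)
  also have "\<dots> = (a+e)*(b+e)*SS n a b (e+1)"
    unfolding sum_lessThan_telescope by (simp add: GG_def TT_def SS_def)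
  finally show ?thesis .
qed

lemma SS_closed: "SS n a b e = pochhammer (a+e) n * pochhammer (b+e) n"
proof (induction n arbitrary: e)
  case 0
  then show ?case by (simp add: SS_def)
next
  case (Suc n)
  show ?case unfolding SS_step Suc pochhammer_rec by (simp add: algebra_simps)
qed


theorem mainTheorem3:
  fixes m k :: nat and \<alpha> \<beta> :: complex
  assumes "m \<ge> 1" and "k \<ge> 1"
    and "\<forall>j::nat. \<alpha> \<noteq> - of_nat j"
    and "\<forall>j::nat. \<beta> \<noteq> - of_nat j"
    and "\<forall>j::nat. 1 + \<alpha> + \<beta> + of_nat k \<noteq> - of_nat j"
  shows "hyp3F2_trunc (- of_nat m) \<alpha> \<beta> (- of_nat m - of_nat k) (1 + \<alpha> + \<beta> + of_nat k) 1 m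
         = pochhammer (1 + \<alpha> + of_nat k) m * pochhammer (1 + \<beta> + of_nat k) m /
           (pochhammer (1 + of_nat k) m * pochhammer (1 + \<alpha> + \<beta> + of_nat k) m)"
proof -
  define c where "c = 1 + \<alpha> + \<beta> + of_nat k"
  define e :: complex where "e = 1 + of_nat k"
  have ce: "\<alpha> + \<beta> + e = c" unfolding c_def e_def by simp
  have cm: "pochhammer c m \<noteq> 0"
    using assms(5) unfolding c_def by (auto simp: pochhammer_eq_0_iff)
  have em: "pochhammer e m \<noteq> 0"
    unfolding e_def pochhammer_eq_0_iff
  proof
    assume "\<exists>i<m. 1 + of_nat k = - (of_nat i :: complex)"
    then obtain i where i: "1 + of_nat k = - (of_nat i :: complex)" by auto
    have "of_nat (1 + k + i) = (1 + of_nat k) + (of_nat i :: complex)" by simp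
    also have "\<dots> = 0" using i by simp
    finally have "of_nat (1 + k + i) = (0::complex)" .
    then show False by (simp only: of_nat_eq_0_iff)
  qed
  let ?D = "pochhammer c m * pochhammer e m"
  have D: "?D \<noteq> 0" using cm em by simp
  have tj: "pochhammer (- of_nat m) j * pochhammer \<alpha> j * pochhammer \<beta> j /
          (pochhammer (- of_nat m - of_nat k) j * pochhammer c j) * 1 ^ j / of_nat (fact j)
        = of_nat (m choose j) * pochhammer \<alpha> j * pochhammer \<beta> j * pochhammer (\<alpha>+\<beta>+e+of_nat j) (m-j)
            * pochhammer e (m-j) / ?D" if j: "j \<le> m" for j
  proof -
    have f1: "pochhammer (- of_nat m) j = (-1)^j * of_nat (m choose j) * (fact j :: complex)"
    proof -
      have g: "fact j * (of_nat m gchoose j) = (-1)^j * pochhammer (- of_nat m :: complex) j"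
        using gbinomial_pochhammer[of "of_nat m :: complex" j] by (simp add: field_simps)
      have o: "((-1)::complex)^j * (-1)^j = 1"
        by (simp add: power_mult_distrib[symmetric])
      have "(-1)^j * (fact j * (of_nat m gchoose j)) = ((-1)^j * (-1)^j) * pochhammer (- of_nat m :: complex) j"
        unfolding g by (simp add: mult.assoc)
      then show ?thesis unfolding o binomial_gbinomial by (simp add: algebra_simps)
    qed
    define P where "P = pochhammer (of_nat m + of_nat k - of_nat j + 1 :: complex) j"
    have f2: "pochhammer (- of_nat m - of_nat k) j = (-1)^j * P"
    proof -
      have "- of_nat m - of_nat k = - (of_nat m + of_nat k :: complex)" by simp
      then show ?thesis using pochhammer_minus[of "of_nat m + of_nat k :: complex" j] unfolding P_def
        by simp
    qed
    have f3: "pochhammer e m = pochhammer e (m-j) * P"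
      using pochhammer_product'[of e "m-j" j] j unfolding P_def e_def
      by (simp add: of_nat_diff algebra_simps)
    have f4: "pochhammer c m = pochhammer c j * pochhammer (c + of_nat j) (m-j)"
      using pochhammer_product[OF j, of c] .
    have nz: "pochhammer c j \<noteq> 0" "pochhammer (c + of_nat j) (m-j) \<noteq> 0"
         "pochhammer e (m-j) \<noteq> 0" "P \<noteq> 0" "(fact j :: complex) \<noteq> 0"
      using cm em f3 f4 by auto
    have pm: "((-1)::complex)^j \<noteq> 0" by simp
    show ?thesis unfolding f1 f2 f3 f4 ce using nz pm
      by (simp add: field_simps)
  qed
  have "hyp3F2_trunc (- of_nat m) \<alpha> \<beta> (- of_nat m - of_nat k) c 1 m
      = (\<Sum>j\<le>m. of_nat (m choose j) * pochhammer \<alpha> j * pochhammer \<beta> j * pochhammer (\<alpha>+\<beta>+e+of_nat j) (m-j)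
            * pochhammer e (m-j) / ?D)"
    unfolding hyp3F2_trunc_def atMost_atLeast0[symmetric] by (rule sum.cong[OF refl], rule tj) simp
  also have "\<dots> = SS m \<alpha> \<beta> e / ?D"
    unfolding SS_def by (simp add: sum_divide_distrib)
  also have "\<dots> = pochhammer (\<alpha>+e) m * pochhammer (\<beta>+e) m / ?D"
    by (simp add: SS_closed)
  finally show ?thesis unfolding c_def e_def by (simp add: algebra_simps)
qed

end
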